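(* For any digraph $G$, $1+\mathrm{cr}(G)\ge\mathrm{lifo}_{\mathtt{mi}}(G)$.
   Context: All digraphs are finite, simple, without self-loops and have at least one vertex (induced subgraphs appearing as game data may be empty). For a finite set $V$, $V^*$ is the set of finite words over $V$, $\epsilon$ the empty word; $X \preceq Y$ means $X$ is a prefix of $Y$; for $X=a_1\cdots a_n$, $|X|=n$ and $\mathrm{let}(X)=\{a_1,\dots,a_n\}$. $A\Delta B$ is symmetric difference. For $X\subseteq V(G)$, $G\setminus X$ is the subgraph induced by $V(G)\setminus X$. Induced subgraphs are identified with their vertex sets. A subgraph $H\subseteq G$ is successor-closed if there is no edge of $G$ from $H$ to $G\setminus H$. Cycle-rank $\mathrm{cr}(G)$: $0$ if $G$ is acyclic; $1+\min_{v\in V(G)}\mathrm{cr}(G\setminus\{v\})$ if $G$ is strongly connected (and not acyclic); otherwise the maximum of $\mathrm{cr}(H)$ over strongly connected components $H$ of $G$. A position is a pair $(X,R)$ with $X\in V(G)^*$ and $R$ a (possibly empty) induced subgraph of $G\setminus\mathrm{let}(X)$; it is an $\mathtt{i}$-position if $R$ is successor-closed. An $\mathtt{i}$-position $(X',R')$ is an $\mathtt{i}$-successor of $(X,R)$ if ($X\preceq X'$ or $X'\preceq X$), $|\mathrm{let}(X)\Delta\mathrm{let}(X')|=1$, and every $v'\in R'$ is reachable by a directed path in $G\setminus(\mathrm{let}(X)\cap\mathrm{let}(X'))$ from some $v\in R$. An $\mathtt{i}$-search from $(X_0,R_0)$ is a finite or infinite sequence of $\mathtt{i}$-positions with each $(X_{i+1},R_{i+1})$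 an $\mathtt{i}$-successor of $(X_i,R_i)$; it is complete if it is infinite or $R_n=\emptyset$ for some $n$, and a complete search is winning for the searchers if $R_n=\emptyset$ for some $n$. A complete search from $(\epsilon,G)$ is monotone if $R_{i+1}\subseteq R_i$ for all $i$, and uses at most $k$ searchers if $|X_i|\le k$ for all $i$. An $\mathtt{i}$-strategy is a function $\sigma$ from $\mathtt{i}$-positions to $V(G)^*$ such that $\sigma(X,R)$ is the first component of some $\mathtt{i}$-successor of $(X,R)$; a search is consistent with $\sigma$ if $X_{i+1}=\sigma(X_i,R_i)$ for all $i$. $\sigma$ is winning if every complete consistent search from $(\epsilon,G)$ is winning for the searchers; it is monotone / uses at most $k$ searchers if every complete consistent search from $(\epsilon,G)$ has that property. $\mathrm{lifo}_{\mathtt{mi}}(G)$ is the minimum $k$ such that there is a monotone winning $\mathtt{i}$-strategy using at most $k$ searchers. *)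

theory Defs
  imports Main "HOL-Library.Extended_Nat" "HOL-Library.Sublist"
begin

(* A digraph is given by a vertex set V and an edge relation E.
   Induced subgraphs are identified with vertex sets S; the edges of G[S] are ind E S. *)

definition ind :: "('a \<times> 'a) set \<Rightarrow> 'a set \<Rightarrow> ('a \<times> 'a) set" where
  "ind E S = E \<inter> (S \<times> S)"

definition digraph :: "'a set \<Rightarrow> ('a \<times> 'a) set \<Rightarrow> bool" where
  "digraph V E \<longleftrightarrow> finite V \<and> V \<noteq> {} \<and> E \<subseteq> V \<times> V \<and> (\<forall>v. (v, v) \<notin> E)"

definition acyclic_on :: "('a \<times> 'a) set \<Rightarrow> 'a set \<Rightarrow> bool" where
  "acyclic_on E S \<longleftrightarrow> acyclic (ind E S)"

definition strongly_connected :: "('a \<times> 'a) set \<Rightarrow> 'a set \<Rightarrow> bool" where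
  "strongly_connected E S \<longleftrightarrow> S \<noteq> {} \<and> (\<forall>x\<in>S. \<forall>y\<in>S. (x, y) \<in> (ind E S)\<^sup>*)"

definition scc :: "('a \<times> 'a) set \<Rightarrow> 'a set \<Rightarrow> 'a set \<Rightarrow> bool" where
  "scc E S H \<longleftrightarrow> H \<subseteq> S \<and> H \<noteq> {}
     \<and> (\<forall>x\<in>H. \<forall>y\<in>H. (x, y) \<in> (ind E S)\<^sup>*)
     \<and> (\<forall>x\<in>H. \<forall>y\<in>S. (x, y) \<in> (ind E S)\<^sup>* \<and> (y, x) \<in> (ind E S)\<^sup>* \<longrightarrow> y \<in> H)"

function cr :: "('a \<times> 'a) set \<Rightarrow> 'a set \<Rightarrow> nat" where
  "cr E S = (if \<not> finite S \<or> acyclic_on E S then 0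
     else if strongly_connected E S then 1 + Min ((\<lambda>v. cr E (S - {v})) ` S)
     else Max ((\<lambda>H. cr E H) ` {H. scc E S H}))"
  by auto
termination
proof (relation "measure (\<lambda>(E, S). card S)")
  show "wf (measure (\<lambda>(E, S). card S))" by simp
next
  fix E :: "('a \<times> 'a) set" and S v
  assume that: "\<not> (\<not> finite S \<or> acyclic_on E S)" "v \<in> S"
  show "((E, S - {v}), (E, S)) \<in> measure (\<lambda>(E, S). card S)"
  proof -
    have "card S > 0" using that by (auto simp: card_gt_0_iff)
    then show ?thesis using that by (simp add: card_Diff1_less)
  qed
next
  fix E :: "('a \<times> 'a) set" and S H
  assume a: "\<not> (\<not> finite S \<or> acyclic_on E S)" "\<not> strongly_connected E S"
    "H \<in> {H. scc E S H}"
  then have "H \<subseteq> S" "H \<noteq> S" unfolding scc_def strongly_connected_def by auto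
  then have "card H < card S" using a(1) by (simp add: psubset_card_mono)
  then show "((E, H), (E, S)) \<in> measure (\<lambda>(E, S). card S)" by simp
qed

type_synonym 'a pos = "'a list \<times> 'a set"

definition ipos :: "'a set \<Rightarrow> ('a \<times> 'a) set \<Rightarrow> 'a pos \<Rightarrow> bool" where
  "ipos V E p \<longleftrightarrow> set (fst p) \<subseteq> V \<and> snd p \<subseteq> V - set (fst p)
     \<and> (\<forall>u\<in>snd p. \<forall>w\<in>V - set (fst p). (u, w) \<in> E \<longrightarrow> w \<in> snd p)"

definition isucc :: "'a set \<Rightarrow> ('a \<times> 'a) set \<Rightarrow> 'a pos \<Rightarrow> 'a pos \<Rightarrow> bool" where
  "isucc V E p p' \<longleftrightarrow> ipos V E p' \<and>
     (prefix (fst p) (fst p') \<or> prefix (fst p') (fst p)) \<and>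
     card ((set (fst p) - set (fst p')) \<union> (set (fst p') - set (fst p))) = 1 \<and>
     (\<forall>v'\<in>snd p'. \<exists>v\<in>snd p.
        (v, v') \<in> (ind E (V - (set (fst p) \<inter> set (fst p'))))\<^sup>*)"

(* A (finite or infinite) sequence: s with valid indices i < len; len = \<infinity> for infinite ones *)
definition isearch :: "'a set \<Rightarrow> ('a \<times> 'a) set \<Rightarrow> 'a pos \<Rightarrow> (nat \<Rightarrow> 'a pos) \<Rightarrow> enat \<Rightarrow> bool" where
  "isearch V E p0 s len \<longleftrightarrow> 0 < len \<and> s 0 = p0 \<and>
     (\<forall>i. enat i < len \<longrightarrow> ipos V E (s i)) \<and>
     (\<forall>i. enat (Suc i) < len \<longrightarrow> isucc V E (s i) (s (Suc i)))"

definition complete_search :: "(nat \<Rightarrow> 'a pos) \<Rightarrow> enat \<Rightarrow> bool" where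
  "complete_search s len \<longleftrightarrow> len = \<infinity> \<or> (\<exists>n. enat n < len \<and> snd (s n) = {})"

definition winning_search :: "(nat \<Rightarrow> 'a pos) \<Rightarrow> enat \<Rightarrow> bool" where
  "winning_search s len \<longleftrightarrow> (\<exists>n. enat n < len \<and> snd (s n) = {})"

definition monotone_search :: "(nat \<Rightarrow> 'a pos) \<Rightarrow> enat \<Rightarrow> bool" where
  "monotone_search s len \<longleftrightarrow> (\<forall>i. enat (Suc i) < len \<longrightarrow> snd (s (Suc i)) \<subseteq> snd (s i))"

definition search_uses_at_most :: "nat \<Rightarrow> (nat \<Rightarrow> 'a pos) \<Rightarrow> enat \<Rightarrow> bool" where
  "search_uses_at_most k s len \<longleftrightarrow> (\<forall>i. enat i < len \<longrightarrow> length (fst (s i)) \<le> k)"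

definition istrategy :: "'a set \<Rightarrow> ('a \<times> 'a) set \<Rightarrow> ('a pos \<Rightarrow> 'a list) \<Rightarrow> bool" where
  "istrategy V E \<sigma> \<longleftrightarrow> (\<forall>p. ipos V E p \<longrightarrow> (\<exists>p'. isucc V E p p' \<and> fst p' = \<sigma> p))"

definition consistent :: "('a pos \<Rightarrow> 'a list) \<Rightarrow> (nat \<Rightarrow> 'a pos) \<Rightarrow> enat \<Rightarrow> bool" where
  "consistent \<sigma> s len \<longleftrightarrow> (\<forall>i. enat (Suc i) < len \<longrightarrow> fst (s (Suc i)) = \<sigma> (s i))"

definition cc_search :: "'a set \<Rightarrow> ('a \<times> 'a) set \<Rightarrow> ('a pos \<Rightarrow> 'a list) \<Rightarrow> (nat \<Rightarrow> 'a pos) \<Rightarrow> enat \<Rightarrow> bool" where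
  "cc_search V E \<sigma> s len \<longleftrightarrow> isearch V E ([], V) s len \<and> complete_search s len \<and> consistent \<sigma> s len"

definition mi_winning_strategy :: "'a set \<Rightarrow> ('a \<times> 'a) set \<Rightarrow> nat \<Rightarrow> ('a pos \<Rightarrow> 'a list) \<Rightarrow> bool" where
  "mi_winning_strategy V E k \<sigma> \<longleftrightarrow> istrategy V E \<sigma> \<and>
     (\<forall>s len. cc_search V E \<sigma> s len \<longrightarrow>
        winning_search s len \<and> monotone_search s len \<and> search_uses_at_most k s len)"

definition lifo_mi :: "'a set \<Rightarrow> ('a \<times> 'a) set \<Rightarrow> nat" where
  "lifo_mi V E = (LEAST k. \<exists>\<sigma>. mi_winning_strategy V E k \<sigma>)"

end

theory Submission
  imports Defs
begin

declare cr.simps[simp del]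

definition sccof :: "('a \<times> 'a) set \<Rightarrow> 'a set \<Rightarrow> 'a \<Rightarrow> 'a set" where
  "sccof E W x = {y\<in>W. (x,y) \<in> (ind E W)\<^sup>* \<and> (y,x) \<in> (ind E W)\<^sup>*}"

fun arena :: "('a \<times> 'a) set \<Rightarrow> 'a set \<Rightarrow> 'a list \<Rightarrow> 'a set" where
  "arena E W [] = W"
| "arena E W (x#xs) = arena E (sccof E W x - {x}) xs"

fun good :: "('a \<times> 'a) set \<Rightarrow> 'a set \<Rightarrow> 'a list \<Rightarrow> bool" where
  "good E W [] = True"
| "good E W (x#xs) = (x \<in> W \<and> (sccof E W x - {x} \<noteq> {} \<longrightarrow> cr E (sccof E W x - {x}) < cr E (sccof E W x))
      \<and> good E (sccof E W x - {x}) xs)"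

fun rinv :: "('a \<times> 'a) set \<Rightarrow> 'a set \<Rightarrow> 'a list \<Rightarrow> 'a set \<Rightarrow> bool" where
  "rinv E W [] R = True"
| "rinv E W (x#xs) R = ((\<forall>u\<in>R. \<forall>c\<in>sccof E W x. (u,c) \<in> E \<longrightarrow> u \<in> sccof E W x)
      \<and> rinv E (sccof E W x - {x}) xs R)"

lemma arena_snoc: "arena E W (xs@[x]) = sccof E (arena E W xs) x - {x}"
  by (induction xs arbitrary: W) auto

lemma good_snoc: "good E W (xs@[x]) = (good E W xs \<and> x \<in> arena E W xs \<and>
   (sccof E (arena E W xs) x - {x} \<noteq> {} \<longrightarrow> cr E (sccof E (arena E W xs) x - {x}) < cr E (sccof E (arena E W xs) x)))"
  by (induction xs arbitrary: W) auto

lemma rinv_snoc: "rinv E W (xs@[x]) R = (rinv E W xs R \<and>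
   (\<forall>u\<in>R. \<forall>c\<in>sccof E (arena E W xs) x. (u,c) \<in> E \<longrightarrow> u \<in> sccof E (arena E W xs) x))"
  by (induction xs arbitrary: W) auto

lemma rinv_mono: "rinv E W xs R \<Longrightarrow> R' \<subseteq> R \<Longrightarrow> rinv E W xs R'"
  by (induction xs arbitrary: W) auto

lemma sccof_sub: "sccof E W x \<subseteq> W" unfolding sccof_def by auto

lemma arena_sub: "arena E W xs \<subseteq> W - set xs"
proof (induction xs arbitrary: W)
  case (Cons x xs)
  then show ?case using sccof_sub[of E W x] by force
qed simp

lemma sccof_self: "x \<in> W \<Longrightarrow> x \<in> sccof E W x" unfolding sccof_def by auto

lemma sccof_same: "y \<in> sccof E W x \<Longrightarrow> sccof E W y = sccof E W x"
  unfolding sccof_def by (auto intro: rtrancl_trans)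

lemma scc_sccof: "x \<in> W \<Longrightarrow> scc E W (sccof E W x)"
  unfolding scc_def sccof_def by (auto intro: rtrancl_trans)

lemma ind_mono: "A \<subseteq> B \<Longrightarrow> ind E A \<subseteq> ind E B" unfolding ind_def by auto

lemma cr_scc_le:
  assumes "finite S" "scc E S H" shows "cr E H \<le> cr E S"
proof -
  have HS: "H \<subseteq> S" using assms(2) unfolding scc_def by auto
  show ?thesis
  proof (cases "acyclic_on E S")
    case True
    then have "acyclic_on E H" unfolding acyclic_on_def
      using acyclic_subset ind_mono[OF HS] by blast
    then show ?thesis by (subst cr.simps[of E H]) simp
  next
    case na: False
    show ?thesis
    proof (cases "strongly_connected E S")
      case True
      have "H = S"
      proof
        show "S \<subseteq> H"
        proof
          fix y assume y: "y \<in> S"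
          obtain x where x: "x \<in> H" using assms(2) unfolding scc_def by auto
          then show "y \<in> H" using True y HS assms(2) unfolding strongly_connected_def scc_def by blast
        qed
      qed (rule HS)
      then show ?thesis by simp
    next
      case False
      have fin: "finite {H. scc E S H}"
        by (rule finite_subset[of _ "Pow S"]) (auto simp: scc_def assms(1))
      have "cr E S = Max ((\<lambda>H. cr E H) ` {H. scc E S H})"
        using na False assms(1) by (subst cr.simps[of E S]) simp
      moreover have "cr E H \<le> Max ((\<lambda>H. cr E H) ` {H. scc E S H})"
        using fin assms(2) by (intro Max_ge) auto
      ultimately show ?thesis by simp
    qed
  qed
qed


lemma path_in_scc:
  assumes "(x,y) \<in> (ind E W)\<^sup>*"
  shows "(y,c) \<in> (ind E W)\<^sup>* \<Longrightarrow> (c,x) \<in> (ind E W)\<^sup>* \<Longrightarrow> (x,y) \<in> (ind E (sccof E W c))\<^sup>*"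
  using assms
proof (induction rule: converse_rtrancl_induct)
  case base then show ?case by simp
next
  case (step x z)
  have cz: "(c,z) \<in> (ind E W)\<^sup>*" using step by (meson rtrancl_into_rtrancl)
  have zc: "(z,c) \<in> (ind E W)\<^sup>*" using step by (meson rtrancl_trans)
  have xc: "(x,c) \<in> (ind E W)\<^sup>*" using step by (meson converse_rtrancl_into_rtrancl rtrancl_trans)
  have xW: "x \<in> W" "z \<in> W" using step(1) unfolding ind_def by auto
  have "(x,z) \<in> ind E (sccof E W c)"
    using step(1) xW cz zc xc step(5) unfolding ind_def sccof_def by auto
  moreover have "(z,y) \<in> (ind E (sccof E W c))\<^sup>*" using step cz by blast
  ultimately show ?case by (meson converse_rtrancl_into_rtrancl)
qed

lemma sccof_sc: "c \<in> W \<Longrightarrow> strongly_connected E (sccof E W c)"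
  unfolding strongly_connected_def
proof (intro conjI ballI)
  assume "c \<in> W" then show "sccof E W c \<noteq> {}" using sccof_self by fast
next
  fix x y assume "x \<in> sccof E W c" "y \<in> sccof E W c"
  then show "(x,y) \<in> (ind E (sccof E W c))\<^sup>*"
    by (intro path_in_scc) (auto simp: sccof_def intro: rtrancl_trans)
qed

lemma cr_drop:
  assumes fin: "finite W" and cW: "c \<in> W" and x: "x \<in> sccof E W c"
    and xmin: "cr E (sccof E W c - {x}) = Min ((\<lambda>v. cr E (sccof E W c - {v})) ` sccof E W c)"
    and ne: "sccof E W c - {x} \<noteq> {}"
  shows "cr E (sccof E W c - {x}) < cr E (sccof E W c)"
proof -
  let ?C = "sccof E W c"
  have sc: "strongly_connected E ?C" using sccof_sc[OF cW] .
  obtain y where y: "y \<in> ?C" "y \<noteq> x" using ne by auto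
  have "(x,y) \<in> (ind E ?C)\<^sup>*" "(y,x) \<in> (ind E ?C)\<^sup>*" using sc x y unfolding strongly_connected_def by auto
  then have "(x,y) \<in> (ind E ?C)\<^sup>+" "(y,x) \<in> (ind E ?C)\<^sup>+" using y(2) by (auto simp: rtrancl_eq_or_trancl)
  then have "(x,x) \<in> (ind E ?C)\<^sup>+" by auto
  then have na: "\<not> acyclic_on E ?C" unfolding acyclic_on_def acyclic_def by auto
  have finC: "finite ?C" using fin sccof_sub finite_subset by metis
  have "cr E ?C = 1 + Min ((\<lambda>v. cr E (?C - {v})) ` ?C)"
    using na sc finC by (subst cr.simps[of E ?C]) simp
  then show ?thesis using xmin by simp
qed

lemma good_len: "finite W \<Longrightarrow> good E W X \<Longrightarrow> length X \<le> 1 + cr E W"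
proof (induction X arbitrary: W)
  case Nil then show ?case by simp
next
  case (Cons x xs)
  show ?case
  proof (cases xs)
    case Nil then show ?thesis by simp
  next
    case (Cons y ys)
    let ?H = "sccof E W x"
    have g: "x \<in> W" "?H - {x} \<noteq> {} \<longrightarrow> cr E (?H - {x}) < cr E ?H" "good E (?H - {x}) xs"
      using Cons.prems by auto
    have "y \<in> ?H - {x}" using g(3) Cons by simp
    then have lt: "cr E (?H - {x}) < cr E ?H" using g(2) by blast
    have finH: "finite (?H - {x})" using Cons.prems(1) sccof_sub finite_subset by (metis finite_Diff)
    have "length xs \<le> 1 + cr E (?H - {x})" using Cons.IH[OF finH g(3)] .
    moreover have "cr E ?H \<le> cr E W" using cr_scc_le[OF Cons.prems(1) scc_sccof[OF g(1)]] .
    ultimately show ?thesis using lt by simp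
  qed
qed


lemma src_exists:
  assumes fin: "finite W" and ne: "R \<inter> W \<noteq> {}"
  shows "\<exists>c. c \<in> R \<inter> W \<and> (\<forall>y\<in>R \<inter> W. (y,c) \<in> (ind E W)\<^sup>* \<longrightarrow> (c,y) \<in> (ind E W)\<^sup>*)"
proof -
  let ?T = "R \<inter> W"
  define f where "f c = card {y\<in>?T. (y,c) \<in> (ind E W)\<^sup>*}" for c
  have finT: "finite ?T" using fin by simp
  have "Min (f ` ?T) \<in> f ` ?T" using finT ne by (intro Min_in) auto
  then obtain c where c: "c \<in> ?T" "f c = Min (f ` ?T)" by (metis imageE)
  have "\<forall>y\<in>?T. (y,c) \<in> (ind E W)\<^sup>* \<longrightarrow> (c,y) \<in> (ind E W)\<^sup>*"
  proof (intro ballI impI, rule ccontr)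
    fix y assume y: "y \<in> ?T" "(y,c) \<in> (ind E W)\<^sup>*" "(c,y) \<notin> (ind E W)\<^sup>*"
    have "{z\<in>?T. (z,y) \<in> (ind E W)\<^sup>*} \<subset> {z\<in>?T. (z,c) \<in> (ind E W)\<^sup>*}"
      using y c(1) by (auto intro: rtrancl_trans)
    moreover have "finite {z\<in>?T. (z,c) \<in> (ind E W)\<^sup>*}" by (rule rev_finite_subset[OF finT]) auto
    ultimately have "f y < f c" unfolding f_def by (intro psubset_card_mono)
    moreover have "f c \<le> f y" using c(2) y(1) finT by simp
    ultimately show False by simp
  qed
  then show ?thesis using c(1) by blast
qed

definition srcv :: "('a \<times> 'a) set \<Rightarrow> 'a set \<Rightarrow> 'a set \<Rightarrow> 'a" where
  "srcv E W R = (SOME c. c \<in> R \<inter> W \<and> (\<forall>y\<in>R \<inter> W. (y,c) \<in> (ind E W)\<^sup>* \<longrightarrow> (c,y) \<in> (ind E W)\<^sup>*))"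

lemma srcv:
  assumes "finite W" "R \<inter> W \<noteq> {}"
  shows "srcv E W R \<in> R \<inter> W" "\<forall>y\<in>R \<inter> W. (y,srcv E W R) \<in> (ind E W)\<^sup>* \<longrightarrow> (srcv E W R,y) \<in> (ind E W)\<^sup>*"
  using someI_ex[OF src_exists[OF assms, of E]] unfolding srcv_def by blast+

definition pick :: "('a \<times> 'a) set \<Rightarrow> 'a set \<Rightarrow> 'a set \<Rightarrow> 'a" where
  "pick E W R = (SOME x. x \<in> sccof E W (srcv E W R) \<and>
     cr E (sccof E W (srcv E W R) - {x}) = Min ((\<lambda>v. cr E (sccof E W (srcv E W R) - {v})) ` sccof E W (srcv E W R)))"

lemma pick:
  assumes fin: "finite W" and ne: "R \<inter> W \<noteq> {}"
  shows "pick E W R \<in> sccof E W (srcv E W R)"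
    "cr E (sccof E W (srcv E W R) - {pick E W R}) = Min ((\<lambda>v. cr E (sccof E W (srcv E W R) - {v})) ` sccof E W (srcv E W R))"
proof -
  let ?C = "sccof E W (srcv E W R)"
  have cW: "srcv E W R \<in> W" using srcv[OF assms] by auto
  have finC: "finite ?C" using fin sccof_sub finite_subset by metis
  have neC: "?C \<noteq> {}" using sccof_self[OF cW] by auto
  have "Min ((\<lambda>v. cr E (?C - {v})) ` ?C) \<in> (\<lambda>v. cr E (?C - {v})) ` ?C"
    using finC neC by (intro Min_in) auto
  then have ex: "\<exists>x. x \<in> ?C \<and> cr E (?C - {x}) = Min ((\<lambda>v. cr E (?C - {v})) ` ?C)" by auto
  show "pick E W R \<in> ?C" "cr E (?C - {pick E W R}) = Min ((\<lambda>v. cr E (?C - {v})) ` ?C)"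
    using someI_ex[OF ex] unfolding pick_def by blast+
qed

lemma C_in_R:
  assumes fin: "finite W" and ne: "R \<inter> W \<noteq> {}"
    and closed: "\<forall>u\<in>R. \<forall>w\<in>W. (u,w) \<in> E \<longrightarrow> w \<in> R"
  shows "sccof E W (srcv E W R) \<subseteq> R"
proof
  fix y assume "y \<in> sccof E W (srcv E W R)"
  then have "(srcv E W R, y) \<in> (ind E W)\<^sup>*" unfolding sccof_def by auto
  then show "y \<in> R"
  proof (induction rule: rtrancl_induct)
    case base then show ?case using srcv[OF fin ne] by auto
  next
    case (step a b) then show ?case using closed unfolding ind_def by auto
  qed
qed

definition dropX :: "'a list \<Rightarrow> 'a list" where
  "dropX X = take ((LEAST n. set (take n X) = set X) - 1) X"

lemma dropX:
  assumes "X \<noteq> []"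
  shows "prefix (dropX X) X" "card ((set X - set (dropX X)) \<union> (set (dropX X) - set X)) = 1"
proof -
  define n where "n = (LEAST n. set (take n X) = set X)"
  have ex: "set (take (length X) X) = set X" by simp
  have nle: "n \<le> length X" unfolding n_def by (rule Least_le) simp
  have nset: "set (take n X) = set X" unfolding n_def by (rule LeastI[of _ "length X"]) simp
  have n0: "n \<noteq> 0" using nset assms by (metis set_empty take_0)
  have ns: "set (take (n-1) X) \<noteq> set X"
  proof
    assume "set (take (n-1) X) = set X"
    then have "n \<le> n - 1" unfolding n_def by (rule Least_le)
    then show False using n0 by simp
  qed
  have tk: "take n X = take (n-1) X @ [X ! (n-1)]"
    using n0 nle by (metis Suc_diff_1 Suc_le_lessD bot_nat_0.not_eq_extremum diff_less less_one take_Suc_conv_app_nth order_less_le_trans)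
  have d: "dropX X = take (n-1) X" unfolding dropX_def n_def ..
  show "prefix (dropX X) X" unfolding d by (rule take_is_prefix)
  have sub: "set (take (n-1) X) \<subseteq> set X" by (rule set_take_subset)
  have u: "set X = insert (X!(n-1)) (set (take (n-1) X))" using nset tk by simp
  have "X!(n-1) \<notin> set (take (n-1) X)" using ns u by (metis insert_absorb)
  then have "set X - set (take (n-1) X) = {X ! (n-1)}"
    using u by auto
  then show "card ((set X - set (dropX X)) \<union> (set (dropX X) - set X)) = 1"
    unfolding d using sub by (simp add: Diff_eq_empty_iff[THEN iffD2])
qed

lemma dropX_distinct: "distinct X \<Longrightarrow> dropX X = butlast X"
proof -
  assume dX: "distinct X"
  have "(LEAST n. set (take n X) = set X) = length X"
  proof (rule Least_equality)
    fix m assume m: "set (take m X) = set X"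
    have "card (set (take m X)) = length (take m X)" using dX by (simp add: distinct_card)
    then show "length X \<le> m" using m dX by (simp add: distinct_card)
  qed simp
  then show ?thesis unfolding dropX_def by (simp add: butlast_conv_take)
qed


definition strat :: "'a set \<Rightarrow> ('a \<times> 'a) set \<Rightarrow> 'a pos \<Rightarrow> 'a list" where
  "strat V E p = (if snd p = {} \<or> arena E V (fst p) \<inter> snd p = {}
     then (if fst p = [] then [SOME v. v \<in> V] else dropX (fst p))
     else fst p @ [pick E (arena E V (fst p)) (snd p)])"

lemma closed_arena:
  assumes "ipos V E (X,R)"
  shows "\<forall>u\<in>R. \<forall>w\<in>arena E V X. (u,w) \<in> E \<longrightarrow> w \<in> R"
  using assms arena_sub[of E V X] unfolding ipos_def by auto

lemma strat_cases:
  assumes dg: "digraph V E" and ip: "ipos V E (X,R)"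
  shows "(strat V E (X,R) = [SOME v. v \<in> V] \<and> X = [] \<and> R = {})
    \<or> (X \<noteq> [] \<and> strat V E (X,R) = dropX X \<and> (R = {} \<or> arena E V X \<inter> R = {}))
    \<or> (R \<noteq> {} \<and> arena E V X \<inter> R \<noteq> {} \<and> strat V E (X,R) = X @ [pick E (arena E V X) R])"
proof -
  have "R \<subseteq> V" using ip unfolding ipos_def by auto
  then have "X = [] \<Longrightarrow> R \<noteq> {} \<Longrightarrow> arena E V X \<inter> R \<noteq> {}" by auto
  then show ?thesis unfolding strat_def by auto
qed

lemma pick_facts:
  assumes dg: "digraph V E" and ip: "ipos V E (X,R)" and ne: "arena E V X \<inter> R \<noteq> {}"
  defines "W \<equiv> arena E V X"
  defines "C \<equiv> sccof E W (srcv E W R)"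
  shows "pick E W R \<in> C" "C \<subseteq> R" "C \<subseteq> W" "sccof E W (pick E W R) = C" "srcv E W R \<in> W"
    "finite W" "pick E W R \<notin> set X" "pick E W R \<in> V"
    "sccof E W (pick E W R) - {pick E W R} \<noteq> {} \<longrightarrow>
       cr E (sccof E W (pick E W R) - {pick E W R}) < cr E (sccof E W (pick E W R))"
proof -
  have finV: "finite V" using dg unfolding digraph_def by auto
  show finW: "finite W" unfolding W_def using arena_sub[of E V X] finV finite_subset by blast
  have ne': "R \<inter> W \<noteq> {}" using ne unfolding W_def by auto
  show p: "pick E W R \<in> C" unfolding C_def using pick(1)[OF finW ne'] .
  show CR: "C \<subseteq> R" unfolding C_def W_def using C_in_R[OF finW[unfolded W_def] _ closed_arena[OF ip]] ne by auto
  show "C \<subseteq> W" unfolding C_def by (rule sccof_sub)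
  show sc: "sccof E W (pick E W R) = C" unfolding C_def using p[unfolded C_def] by (rule sccof_same)
  show cW: "srcv E W R \<in> W" using srcv(1)[OF finW ne'] by auto
  show "pick E W R \<notin> set X" "pick E W R \<in> V" using p CR ip unfolding ipos_def by auto
  show "sccof E W (pick E W R) - {pick E W R} \<noteq> {} \<longrightarrow>
       cr E (sccof E W (pick E W R) - {pick E W R}) < cr E (sccof E W (pick E W R))"
    unfolding sc C_def using cr_drop[OF finW cW p[unfolded C_def] pick(2)[OF finW ne']] by blast
qed

lemma strat_valid:
  assumes dg: "digraph V E" and ip: "ipos V E (X,R)"
  shows "isucc V E (X,R) (strat V E (X,R), {})"
proof -
  have XV: "set X \<subseteq> V" using ip unfolding ipos_def by auto
  have VN: "V \<noteq> {}" using dg unfolding digraph_def by auto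
  consider (a) "strat V E (X,R) = [SOME v. v \<in> V]" "X = []"
    | (b) "X \<noteq> []" "strat V E (X,R) = dropX X"
    | (c) "arena E V X \<inter> R \<noteq> {}" "strat V E (X,R) = X @ [pick E (arena E V X) R]"
    using strat_cases[OF dg ip] by blast
  then show ?thesis
  proof cases
    case a
    have "(SOME v. v \<in> V) \<in> V" using VN by (simp add: some_in_eq)
    then show ?thesis using a unfolding isucc_def ipos_def by simp
  next
    case b
    have "set (dropX X) \<subseteq> set X" using dropX(1)[OF b(1)] by (metis set_mono_prefix)
    then show ?thesis using b dropX[OF b(1)] XV unfolding isucc_def ipos_def by auto
  next
    case c
    have "pick E (arena E V X) R \<notin> set X" "pick E (arena E V X) R \<in> V" using pick_facts[OF dg ip c(1)] by auto
    moreover have "insert (pick E (arena E V X) R) (set X) - set X = {pick E (arena E V X) R}"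
      using calculation by auto
    ultimately show ?thesis using c XV unfolding isucc_def ipos_def by auto
  qed
qed

lemma strat_istrategy: "digraph V E \<Longrightarrow> istrategy V E (strat V E)"
  unfolding istrategy_def using strat_valid by fastforce


definition Inv :: "'a set \<Rightarrow> ('a \<times> 'a) set \<Rightarrow> 'a pos \<Rightarrow> bool" where
  "Inv V E p \<longleftrightarrow> ipos V E p \<and> distinct (fst p) \<and> length (fst p) \<le> 1 + cr E V
     \<and> (snd p \<noteq> {} \<longrightarrow> good E V (fst p) \<and> rinv E V (fst p) (snd p))"

definition mu :: "'a set \<Rightarrow> 'a pos \<Rightarrow> nat" where
  "mu V p = card (snd p) * (card V + 1) + length (fst p)"

lemma reach_closed:
  assumes "ipos V E (X,R)" "(v,v') \<in> (ind E (V - set X))\<^sup>*" "v \<in> R"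
  shows "v' \<in> R"
  using assms(2,3)
proof (induction rule: rtrancl_induct)
  case (step a b) then show ?case using assms(1) unfolding ipos_def ind_def by auto
qed simp

lemma reach_remove:
  assumes "ipos V E (X,R)" "\<forall>u\<in>R. (u,x) \<notin> E" "(v,v') \<in> (ind E (V - (set X - {x})))\<^sup>*" "v \<in> R"
  shows "v' \<in> R"
  using assms(3,4)
proof (induction rule: rtrancl_induct)
  case (step a b)
  then have "b \<noteq> x" using assms(2) unfolding ind_def by auto
  then show ?case using step assms(1) unfolding ipos_def ind_def by auto
qed simp

lemma step_lemma:
  assumes dg: "digraph V E" and inv: "Inv V E (X,R)" and su: "isucc V E (X,R) (X',R')"
    and st: "X' = strat V E (X,R)"
  shows "Inv V E (X',R') \<and> R' \<subseteq> R \<and> (R' \<noteq> {} \<longrightarrow> mu V (X',R') < mu V (X,R))"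
proof -
  have finV: "finite V" using dg unfolding digraph_def by auto
  have ip: "ipos V E (X,R)" and dX: "distinct X" and lX: "length X \<le> 1 + cr E V"
    and gr: "R \<noteq> {} \<Longrightarrow> good E V X \<and> rinv E V X R" using inv unfolding Inv_def by auto
  have ip': "ipos V E (X',R')" and reach: "\<forall>v'\<in>R'. \<exists>v\<in>R. (v,v') \<in> (ind E (V - (set X \<inter> set X')))\<^sup>*"
    using su unfolding isucc_def by auto
  have RV: "R \<subseteq> V - set X" "R' \<subseteq> V - set X'" "set X' \<subseteq> V" using ip ip' unfolding ipos_def by auto
  have finR: "finite R" using RV finV finite_subset by blast
  consider (a) "X' = [SOME v. v \<in> V]" "X = []" "R = {}"
    | (b) "X \<noteq> []" "X' = dropX X" "R = {} \<or> arena E V X \<inter> R = {}"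
    | (c) "R \<noteq> {}" "arena E V X \<inter> R \<noteq> {}" "X' = X @ [pick E (arena E V X) R]"
    using strat_cases[OF dg ip] st by blast
  then show ?thesis
  proof cases
    case a
    then have "R' = {}" using reach by auto
    then show ?thesis using a ip' unfolding Inv_def by auto
  next
    case b
    have X'b: "X' = butlast X" using b dropX_distinct[OF dX] by simp
    obtain ys x where X: "X = ys @ [x]" using b(1) by (metis append_butlast_last_id)
    have X': "X' = ys" using X'b X by simp
    have dX': "distinct X'" using dX X'b by (simp add: distinct_butlast)
    have lX': "length X' \<le> 1 + cr E V" using lX X' X by simp
    show ?thesis
    proof (cases "R = {}")
      case True
      then have "R' = {}" using reach by auto
      then show ?thesis using ip' dX' lX' True unfolding Inv_def by auto
    next
      case False
      have ar: "arena E V X \<inter> R = {}" using b(3) False by auto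
      have g: "good E V X" "rinv E V X R" using gr False by auto
      have gys: "good E V ys" "x \<in> arena E V ys" using g(1) unfolding X good_snoc by auto
      have rl: "\<forall>u\<in>R. \<forall>c\<in>sccof E (arena E V ys) x. (u,c) \<in> E \<longrightarrow> u \<in> sccof E (arena E V ys) x"
        using g(2) unfolding X rinv_snoc by auto
      have xin: "x \<in> sccof E (arena E V ys) x" using sccof_self[OF gys(2)] .
      have arX: "arena E V X = sccof E (arena E V ys) x - {x}" using X arena_snoc by simp
      have noedge: "\<forall>u\<in>R. (u,x) \<notin> E"
      proof (intro ballI notI)
        fix u assume u: "u \<in> R" "(u,x) \<in> E"
        then have "u \<in> sccof E (arena E V ys) x" using rl xin by blast
        moreover have "u \<noteq> x" using u RV X by auto
        ultimately show False using ar arX u by auto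
      qed
      have sets: "set X \<inter> set X' = set X - {x}" using X X' dX by auto
      have R'R: "R' \<subseteq> R"
      proof
        fix v' assume "v' \<in> R'"
        then obtain v where "v \<in> R" "(v,v') \<in> (ind E (V - (set X - {x})))\<^sup>*" using reach sets by auto
        then show "v' \<in> R" using reach_remove[OF ip noedge] by blast
      qed
      have "card R' \<le> card R" using R'R finR by (simp add: card_mono)
      then have "card R' * (card V + 1) \<le> card R * (card V + 1)" by (rule mult_le_mono1)
      then have "mu V (X',R') < mu V (X,R)" unfolding mu_def using X X' by simp
      moreover have "Inv V E (X',R')"
        using ip' dX' lX' gys(1) X' rinv_mono[OF g(2) R'R] unfolding Inv_def
        by (simp add: X rinv_snoc)
      ultimately show ?thesis using R'R by blast
    qed
  next
    case c
    let ?W = "arena E V X" and ?x = "pick E (arena E V X) R"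
    let ?C = "sccof E ?W (srcv E ?W R)"
    note pf = pick_facts[OF dg ip c(2)]
    have sets: "set X \<inter> set X' = set X" using c(3) by auto
    have R'R: "R' \<subseteq> R"
    proof
      fix v' assume "v' \<in> R'"
      then obtain v where "v \<in> R" "(v,v') \<in> (ind E (V - set X))\<^sup>*" using reach sets by auto
      then show "v' \<in> R" using reach_closed[OF ip] by blast
    qed
    have xR': "?x \<notin> R'" using RV c(3) by auto
    have xR: "?x \<in> R" using pf by auto
    have g: "good E V X" "rinv E V X R" using gr c(1) by auto
    have g': "good E V X'" unfolding c(3) good_snoc using g(1) pf by auto
    have finW: "finite ?W" using pf by simp
    have lX': "length X' \<le> 1 + cr E V" using good_len[OF finV g'] .
    have dX': "distinct X'" using dX c(3) pf by simp
    have lvl: "\<forall>u\<in>R'. \<forall>d\<in>sccof E ?W ?x. (u,d) \<in> E \<longrightarrow> u \<in> sccof E ?W ?x"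
    proof (intro ballI impI)
      fix u d assume u: "u \<in> R'" "d \<in> sccof E ?W ?x" "(u,d) \<in> E"
      have dC: "d \<in> ?C" using u(2) pf by simp
      have uR: "u \<in> R" using u R'R by auto
      have uW: "u \<in> ?W"
      proof (cases X rule: rev_cases)
        case Nil then show ?thesis using uR RV by auto
      next
        case (snoc ys y)
        have rl: "\<forall>u\<in>R. \<forall>c\<in>sccof E (arena E V ys) y. (u,c) \<in> E \<longrightarrow> u \<in> sccof E (arena E V ys) y"
          using g(2) unfolding snoc rinv_snoc by auto
        have arX: "?W = sccof E (arena E V ys) y - {y}" using snoc arena_snoc by simp
        have "d \<in> sccof E (arena E V ys) y" using dC pf arX by auto
        then have "u \<in> sccof E (arena E V ys) y" using rl uR u(3) by blast
        moreover have "u \<noteq> y" using uR RV snoc by auto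
        ultimately show ?thesis using arX by auto
      qed
      have dW: "d \<in> ?W" using dC pf by auto
      have ud: "(u,d) \<in> ind E ?W" using u(3) uW dW unfolding ind_def by auto
      have dc: "(d, srcv E ?W R) \<in> (ind E ?W)\<^sup>*" using dC unfolding sccof_def by auto
      have uc: "(u, srcv E ?W R) \<in> (ind E ?W)\<^sup>*" using ud dc by (meson converse_rtrancl_into_rtrancl)
      have "(srcv E ?W R, u) \<in> (ind E ?W)\<^sup>*" using srcv(2)[OF finW] c(2) uR uW uc by blast
      then have "u \<in> ?C" using uW uc unfolding sccof_def by auto
      then show "u \<in> sccof E ?W ?x" using pf by simp
    qed
    have rv': "rinv E V X' R'" unfolding c(3) rinv_snoc using rinv_mono[OF g(2) R'R] lvl by simp
    have R'sub: "R' \<subseteq> R - {?x}" using R'R xR' by auto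
    have "card R' \<le> card (R - {?x})" using R'sub finR by (simp add: card_mono)
    also have "\<dots> = card R - 1" using xR finR by simp
    finally have cR0: "card R' \<le> card R - 1" .
    have "card R > 0" using xR finR card_gt_0_iff by blast
    then have cR: "card R' + 1 \<le> card R" using cR0 by linarith
    have "length X' \<le> card V" using dX' RV(3) finV by (metis card_mono distinct_card)
    then have l1: "card R' * (card V + 1) + length X' < (card R' + 1) * (card V + 1)" by simp
    have "(card R' + 1) * (card V + 1) \<le> card R * (card V + 1)" using cR by (rule mult_le_mono1)
    then have "mu V (X',R') < mu V (X,R)" unfolding mu_def using l1 by simp
    moreover have "Inv V E (X',R')" using ip' dX' lX' g' rv' unfolding Inv_def by simp
    ultimately show ?thesis using R'R by blast
  qed
qed


lemma step_lemma':
  assumes dg: "digraph V E" and inv: "Inv V E p" and su: "isucc V E p p'"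
    and st: "fst p' = strat V E p"
  shows "Inv V E p' \<and> snd p' \<subseteq> snd p \<and> (snd p' \<noteq> {} \<longrightarrow> mu V p' < mu V p)"
proof -
  obtain X R X' R' where p: "p = (X,R)" "p' = (X',R')" by (cases p, cases p') auto
  show ?thesis using step_lemma[OF dg, of X R X' R'] assms unfolding p by simp
qed

lemma search_inv:
  assumes dg: "digraph V E" and cc: "cc_search V E (strat V E) s len"
  shows "enat i < len \<Longrightarrow> Inv V E (s i) \<and> (enat (Suc i) < len \<longrightarrow> snd (s (Suc i)) \<subseteq> snd (s i)
     \<and> (snd (s (Suc i)) \<noteq> {} \<longrightarrow> mu V (s (Suc i)) < mu V (s i)))"
proof (induction i)
  case 0
  have "s 0 = ([], V)" "ipos V E (s 0)" using cc 0 unfolding cc_search_def isearch_def by auto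
  then have I: "Inv V E (s 0)" unfolding Inv_def by simp
  show ?case
  proof (intro conjI impI)
    show "Inv V E (s 0)" by (rule I)
  next
    assume "enat (Suc 0) < len"
    then have "isucc V E (s 0) (s (Suc 0))" "fst (s (Suc 0)) = strat V E (s 0)"
      using cc unfolding cc_search_def isearch_def consistent_def by auto
    note sl = step_lemma'[OF dg I this]
    show "snd (s (Suc 0)) \<subseteq> snd (s 0)" using sl by blast
    show "snd (s (Suc 0)) \<noteq> {} \<Longrightarrow> mu V (s (Suc 0)) < mu V (s 0)" using sl by blast
  qed
next
  case (Suc i)
  have "enat i < len" using Suc.prems by (meson Suc_ile_eq order_less_imp_le)
  then have IH: "Inv V E (s i)" "enat (Suc i) < len \<longrightarrow> snd (s (Suc i)) \<subseteq> snd (s i)" using Suc.IH by auto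
  have s1: "isucc V E (s i) (s (Suc i))" "fst (s (Suc i)) = strat V E (s i)"
    using cc Suc.prems unfolding cc_search_def isearch_def consistent_def by auto
  have I: "Inv V E (s (Suc i))" using step_lemma'[OF dg IH(1) s1] by blast
  show ?case
  proof (intro conjI impI)
    show "Inv V E (s (Suc i))" by (rule I)
  next
    assume "enat (Suc (Suc i)) < len"
    then have "isucc V E (s (Suc i)) (s (Suc (Suc i)))" "fst (s (Suc (Suc i))) = strat V E (s (Suc i))"
      using cc unfolding cc_search_def isearch_def consistent_def by auto
    note sl = step_lemma'[OF dg I this]
    show "snd (s (Suc (Suc i))) \<subseteq> snd (s (Suc i))" using sl by blast
    show "snd (s (Suc (Suc i))) \<noteq> {} \<Longrightarrow> mu V (s (Suc (Suc i))) < mu V (s (Suc i))" using sl by blast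
  qed
qed

lemma strat_winning:
  assumes dg: "digraph V E"
  shows "mi_winning_strategy V E (1 + cr E V) (strat V E)"
  unfolding mi_winning_strategy_def
proof (intro conjI allI impI)
  show "istrategy V E (strat V E)" using strat_istrategy[OF dg] .
next
  fix s len assume cc: "cc_search V E (strat V E) s len"
  note si = search_inv[OF dg cc]
  show "monotone_search s len" unfolding monotone_search_def
  proof (intro allI impI)
    fix i assume a: "enat (Suc i) < len"
    then have "enat i < len" by (meson Suc_ile_eq order_less_imp_le)
    then show "snd (s (Suc i)) \<subseteq> snd (s i)" using si a by blast
  qed
  show "search_uses_at_most (1 + cr E V) s len" unfolding search_uses_at_most_def
    using si unfolding Inv_def by blast
  show "winning_search s len"
  proof (cases "len = \<infinity>")
    case False
    then show ?thesis using cc unfolding cc_search_def complete_search_def winning_search_def by auto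
  next
    case True
    show ?thesis
    proof (rule ccontr)
      assume nw: "\<not> winning_search s len"
      then have ne: "\<And>n. snd (s n) \<noteq> {}" using True unfolding winning_search_def by auto
      have dec: "\<And>i. mu V (s (Suc i)) < mu V (s i)" using si ne True by simp
      have "\<And>i. mu V (s i) + i \<le> mu V (s 0)"
      proof -
        fix i show "mu V (s i) + i \<le> mu V (s 0)"
        proof (induction i)
          case (Suc i) then show ?case using dec[of i] by simp
        qed simp
      qed
      from this[of "Suc (mu V (s 0))"] show False by simp
    qed
  qed
qed

theorem lemma3:
  fixes V :: "'a set" and E :: "('a \<times> 'a) set"
  assumes "digraph V E"
  shows "1 + cr E V \<ge> lifo_mi V E"
  unfolding lifo_mi_def by (rule Least_le) (use strat_winning[OF assms] in blast)

end
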